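(* For every choice of reward function $Rew()$ and environment function $Env()$, the problem ESCreate (with $Rew()$ and $Env()$ fixed to these choices) is unsolvable: there is no algorithm (Turing machine), regardless of running time or memory, that produces the correct output for every instance.
   Context: Model. Let $X=\{x_1,\dots,x_{|X|}\}$ be Boolean variables and $O$ a finite output set. Software system requirements are a finite set $R$ of pairs $(i,o)$, where $i$ is a truth assignment to $X$ and $o\in O$. Interfaces and components follow the Dana runtime component model: an interface is a set of function prototypes (function name, return type, parameter types) together with a set of typed transfer fields; a component provides one or more interfaces and requires zero or more interfaces, and contains code (in a Dana-like imperative language with assignments, conditionals, loops, arrays, function calls and an output statement; this language can simulate any Turing machine) implementing every function of its provided interfaces; this code may call functions and use transfer fields of its required interfaces. $L_{int}$ and $L_{comp}$ are finite libraries of interfaces and components. Given a base component $c\in L_{comp}$ implementing a function main, a valid component-based software system $S$ based on $c$ (relative to $L_{int},L_{comp}$) is obtained by choosing, for each required interface of $c$, a component of $L_{comp}$ providing it, and recursively for each required interface of every chosen component; separate copies of a component are used for separate required-interface occurrences, and when a component providing several interfaces implements one of them, only a reduced copy containing that interface's code is used. Its component wiring tree has root $c$, vertices the chosen component copies, and arcs (wirings) labelled by the implemented interfaces; no component label may occur twice on a root-to-leaf path. $S$ is working relative to $R$ if for every $(i,o)\in R$, running $S$ on input $i$ outputs $o$. A reward function $Rew()$ maps a system to a positive integer (smaller is better) and an environment function $Env()$ maps a system to a collection of events and metric values; both are computable in time polynomial in the size of the system and $Rew()$ only chooses among working systems. Problem ESCreate: Input: $R$, $L_{int}$, $L_{comp}$,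 base component $c\in L_{comp}$, and $Rew()$, $Env()$. Output: a working system $S$ based on $c$ relative to $L_{int},L_{comp},R$ with the smallest value of $Rew(S)$ among all such working systems, if one exists, and the special symbol $\bot$ otherwise. *)

theory Defs
  imports Main
begin

text \<open>All identifiers (variables, arrays, functions, interfaces, components,
 transfer fields) are natural numbers.  Types are nominal labels.\<close>

type_synonym name = nat
type_synonym ty = nat

definition main_fn :: name where "main_fn = 0"

section \<open>The Dana-like imperative language\<close>

text \<open>Values are natural numbers; booleans are 0 (false) / nonzero (true).\<close>

datatype expr =
    N nat
  | V name
  | Plus expr expr
  | Sub expr expr
  | Less expr expr
  | Eq expr expr
  | And expr expr
  | Not expr
  | ArrRead name expr
  | InLen
  | In expr
  | FieldOwn name
  | FieldReq name name

datatype com =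
    Skip
  | Assign name expr
  | ArrWrite name expr expr
  | Seq com com
  | If expr com com
  | While expr com
  | Out expr
  | Return expr
  | CallR name name name "expr list"   (* x := I.f(args), I a required interface *)
  | CallL name name "expr list"        (* x := f(args), local function *)
  | SetFieldOwn name expr
  | SetFieldReq name name expr

record iface =
  iname :: name
  ifuns :: "(name \<times> ty \<times> ty list) list"     (* function name, return type, parameter types *)
  ifields :: "(name \<times> ty) list"              (* transfer fields *)

record comp =
  cname :: name
  cprov :: "name list"
  creq :: "name list"
  ccode :: "(name \<times> name \<times> name list \<times> com) list"
     (* (implemented interface, function name, parameters, body) *)

text \<open>Component wiring trees: a vertex carries a (copy of a) component and its
 wirings, each labelled by the implemented (required) interface.\<close>
datatype systree = SNode comp "(name \<times> systree) list"

fun root_comp :: "systree \<Rightarrow> comp" where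
  "root_comp (SNode d ws) = d"

fun expr_refs :: "expr \<Rightarrow> name set" where
  "expr_refs (Plus a b) = expr_refs a \<union> expr_refs b"
| "expr_refs (Sub a b) = expr_refs a \<union> expr_refs b"
| "expr_refs (Less a b) = expr_refs a \<union> expr_refs b"
| "expr_refs (Eq a b) = expr_refs a \<union> expr_refs b"
| "expr_refs (And a b) = expr_refs a \<union> expr_refs b"
| "expr_refs (Not a) = expr_refs a"
| "expr_refs (ArrRead _ a) = expr_refs a"
| "expr_refs (In a) = expr_refs a"
| "expr_refs (FieldReq I _) = {I}"
| "expr_refs _ = {}"

fun com_refs :: "com \<Rightarrow> name set" where
  "com_refs (Assign _ e) = expr_refs e"
| "com_refs (ArrWrite _ i e) = expr_refs i \<union> expr_refs e"
| "com_refs (Seq c1 c2) = com_refs c1 \<union> com_refs c2"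
| "com_refs (If b c1 c2) = expr_refs b \<union> com_refs c1 \<union> com_refs c2"
| "com_refs (While b c) = expr_refs b \<union> com_refs c"
| "com_refs (Out e) = expr_refs e"
| "com_refs (Return e) = expr_refs e"
| "com_refs (CallR _ I _ args) = insert I (\<Union>e\<in>set args. expr_refs e)"
| "com_refs (CallL _ _ args) = (\<Union>e\<in>set args. expr_refs e)"
| "com_refs (SetFieldOwn _ e) = expr_refs e"
| "com_refs (SetFieldReq I _ e) = insert I (expr_refs e)"
| "com_refs Skip = {}"

definition wf_iface :: "iface \<Rightarrow> bool" where
  "wf_iface ifc \<longleftrightarrow> distinct (map fst (ifuns ifc)) \<and> distinct (map fst (ifields ifc))"

definition wf_lint :: "iface list \<Rightarrow> bool" where
  "wf_lint Lint \<longleftrightarrow> distinct (map iname Lint) \<and> (\<forall>ifc\<in>set Lint. wf_iface ifc)"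

definition wf_comp :: "iface list \<Rightarrow> comp \<Rightarrow> bool" where
  "wf_comp Lint d \<longleftrightarrow>
     cprov d \<noteq> [] \<and> distinct (cprov d) \<and> distinct (creq d) \<and>
     set (cprov d) \<subseteq> iname ` set Lint \<and> set (creq d) \<subseteq> iname ` set Lint \<and>
     (\<forall>(J, g, ps, b) \<in> set (ccode d).
        J \<in> set (cprov d) \<and> distinct ps \<and> com_refs b \<subseteq> set (creq d)) \<and>
     (\<forall>ifc\<in>set Lint. iname ifc \<in> set (cprov d) \<longrightarrow>
        (\<forall>(g, rt, pts) \<in> set (ifuns ifc).
           \<exists>!e. e \<in> set (ccode d) \<and> fst e = iname ifc \<and> fst (snd e) = g \<and>
                  length (fst (snd (snd e))) = length pts))"

text \<open>valid_sys L A T: T is a valid wiring tree over component library L,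
 where A is the set of component labels on the path above T's root.\<close>
inductive valid_sys :: "comp list \<Rightarrow> name set \<Rightarrow> systree \<Rightarrow> bool" where
  "\<lbrakk> d \<in> set L; cname d \<notin> A; map fst ws = creq d;
     \<forall>I t. (I, t) \<in> set ws \<longrightarrow>
        I \<in> set (cprov (root_comp t)) \<and> valid_sys L (insert (cname d) A) t \<rbrakk>
   \<Longrightarrow> valid_sys L A (SNode d ws)"

section \<open>Operational semantics (small-step, with step counting)\<close>

record frame =
  fpath :: "name list"         (* position of the executing component copy in the tree *)
  fcont :: "com list"          (* continuation *)
  fvars :: "name \<Rightarrow> nat"
  farrs :: "name \<Rightarrow> nat \<Rightarrow> nat"
  fret :: name                 (* caller variable receiving the return value *)

record config =
  stack :: "frame list"
  flds :: "name list \<times> name \<Rightarrow> nat"   (* transfer fields, per wiring *)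
  outs :: "nat list"

fun node_at :: "systree \<Rightarrow> name list \<Rightarrow> systree option" where
  "node_at T [] = Some T"
| "node_at (SNode d ws) (I # p) =
     (case map_of ws I of None \<Rightarrow> None | Some t \<Rightarrow> node_at t p)"

text \<open>Code available at a vertex: the full code at the root, and only the
 code of the implemented interface (reduced copy) elsewhere.\<close>
definition code_at :: "systree \<Rightarrow> name list \<Rightarrow> (name \<times> name \<times> name list \<times> com) list" where
  "code_at T p = (case node_at T p of None \<Rightarrow> []
     | Some t \<Rightarrow> (if p = [] then ccode (root_comp t)
                  else filter (\<lambda>e. fst e = last p) (ccode (root_comp t))))"

fun aval :: "nat list \<Rightarrow> (name list \<times> name \<Rightarrow> nat) \<Rightarrow> frame \<Rightarrow> expr \<Rightarrow> nat" where
  "aval inp fs fr (N n) = n"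
| "aval inp fs fr (V x) = fvars fr x"
| "aval inp fs fr (Plus a b) = aval inp fs fr a + aval inp fs fr b"
| "aval inp fs fr (Sub a b) = aval inp fs fr a - aval inp fs fr b"
| "aval inp fs fr (Less a b) = (if aval inp fs fr a < aval inp fs fr b then 1 else 0)"
| "aval inp fs fr (Eq a b) = (if aval inp fs fr a = aval inp fs fr b then 1 else 0)"
| "aval inp fs fr (And a b) = (if aval inp fs fr a \<noteq> 0 \<and> aval inp fs fr b \<noteq> 0 then 1 else 0)"
| "aval inp fs fr (Not a) = (if aval inp fs fr a = 0 then 1 else 0)"
| "aval inp fs fr (ArrRead x a) = farrs fr x (aval inp fs fr a)"
| "aval inp fs fr InLen = length inp"
| "aval inp fs fr (In a) = (let i = aval inp fs fr a in if i < length inp then inp ! i else 0)"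
| "aval inp fs fr (FieldOwn f) = fs (fpath fr, f)"
| "aval inp fs fr (FieldReq I f) = fs (fpath fr @ [I], f)"

definition bind_params :: "name list \<Rightarrow> nat list \<Rightarrow> name \<Rightarrow> nat" where
  "bind_params ps vs = fold (\<lambda>(x, v) m. m(x := v)) (zip ps vs) (\<lambda>_. 0)"

definition do_return :: "nat \<Rightarrow> config \<Rightarrow> config" where
  "do_return v cfg = (case stack cfg of [] \<Rightarrow> cfg
     | fr # [] \<Rightarrow> cfg\<lparr>stack := []\<rparr>
     | fr # cr # frs \<Rightarrow> cfg\<lparr>stack := cr\<lparr>fvars := (fvars cr)(fret fr := v)\<rparr> # frs\<rparr>)"

definition do_call :: "systree \<Rightarrow> name list \<Rightarrow> name \<Rightarrow> name \<Rightarrow> nat list \<Rightarrow>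
     frame \<Rightarrow> frame list \<Rightarrow> config \<Rightarrow> config option" where
  "do_call T q x f vs fr frs cfg =
     (case find (\<lambda>e. fst (snd e) = f \<and> length (fst (snd (snd e))) = length vs) (code_at T q) of
        None \<Rightarrow> None
      | Some (J, g, ps, body) \<Rightarrow>
          Some (cfg\<lparr>stack := \<lparr>fpath = q, fcont = [body], fvars = bind_params ps vs,
                               farrs = (\<lambda>_ _. 0), fret = x\<rparr> # fr # frs\<rparr>))"

fun step :: "systree \<Rightarrow> nat list \<Rightarrow> config \<Rightarrow> config option" where
  "step T inp cfg = (case stack cfg of
     [] \<Rightarrow> None
   | fr # frs \<Rightarrow> (case fcont fr of
       [] \<Rightarrow> Some (do_return 0 cfg)
     | c # cs \<Rightarrow>
        (let fs = flds cfg; ev = aval inp fs fr; fr' = fr\<lparr>fcont := cs\<rparr> in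
         case c of
           Skip \<Rightarrow> Some (cfg\<lparr>stack := fr' # frs\<rparr>)
         | Assign x e \<Rightarrow> Some (cfg\<lparr>stack := fr'\<lparr>fvars := (fvars fr)(x := ev e)\<rparr> # frs\<rparr>)
         | ArrWrite a i e \<Rightarrow>
             Some (cfg\<lparr>stack := fr'\<lparr>farrs := (farrs fr)(a := (farrs fr a)(ev i := ev e))\<rparr> # frs\<rparr>)
         | Seq c1 c2 \<Rightarrow> Some (cfg\<lparr>stack := fr\<lparr>fcont := c1 # c2 # cs\<rparr> # frs\<rparr>)
         | If b c1 c2 \<Rightarrow>
             Some (cfg\<lparr>stack := fr\<lparr>fcont := (if ev b \<noteq> 0 then c1 else c2) # cs\<rparr> # frs\<rparr>)
         | While b c1 \<Rightarrow>
             Some (cfg\<lparr>stack := fr\<lparr>fcont := (if ev b \<noteq> 0 then c1 # c # cs else cs)\<rparr> # frs\<rparr>)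
         | Out e \<Rightarrow> Some (cfg\<lparr>stack := fr' # frs, outs := outs cfg @ [ev e]\<rparr>)
         | Return e \<Rightarrow> Some (do_return (ev e) cfg)
         | CallR x I f args \<Rightarrow>
             (if node_at T (fpath fr @ [I]) = None then None
              else do_call T (fpath fr @ [I]) x f (map ev args) fr' frs cfg)
         | CallL x f args \<Rightarrow> do_call T (fpath fr) x f (map ev args) fr' frs cfg
         | SetFieldOwn f e \<Rightarrow> Some (cfg\<lparr>stack := fr' # frs, flds := fs((fpath fr, f) := ev e)\<rparr>)
         | SetFieldReq I f e \<Rightarrow>
             Some (cfg\<lparr>stack := fr' # frs, flds := fs((fpath fr @ [I], f) := ev e)\<rparr>))))"

fun steps :: "systree \<Rightarrow> nat list \<Rightarrow> nat \<Rightarrow> config \<Rightarrow> config option" where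
  "steps T inp 0 cfg = Some cfg"
| "steps T inp (Suc k) cfg = (case step T inp cfg of None \<Rightarrow> None | Some cfg' \<Rightarrow> steps T inp k cfg')"

definition init_config :: "com \<Rightarrow> config" where
  "init_config body = \<lparr>stack = [\<lparr>fpath = [], fcont = [body], fvars = (\<lambda>_. 0),
                                  farrs = (\<lambda>_ _. 0), fret = 0\<rparr>],
                       flds = (\<lambda>_. 0), outs = []\<rparr>"

text \<open>Run body in tree T on input inp: Some outputs if execution halts after
 exactly k steps.\<close>
definition run_in :: "systree \<Rightarrow> com \<Rightarrow> nat list \<Rightarrow> nat \<Rightarrow> nat list option" where
  "run_in T body inp k = (case steps T inp k (init_config body) of
       Some cfg \<Rightarrow> (if stack cfg = [] then Some (outs cfg) else None)
     | None \<Rightarrow> None)"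

definition run_sys :: "systree \<Rightarrow> nat list \<Rightarrow> nat \<Rightarrow> nat list option" where
  "run_sys S inp k = (case find (\<lambda>e. fst (snd e) = main_fn \<and> fst (snd (snd e)) = [])
                               (ccode (root_comp S)) of
       None \<Rightarrow> None
     | Some (J, g, ps, body) \<Rightarrow> run_in S body inp k)"

text \<open>Algorithms (Turing-complete model of computation): a program of the same
 language, run stand-alone (no components wired) on a natural-number list input;
 its result is the list of values it outputs.\<close>
definition empty_comp :: comp where
  "empty_comp = \<lparr>cname = 0, cprov = [], creq = [], ccode = []\<rparr>"

definition run_prog :: "com \<Rightarrow> nat list \<Rightarrow> nat \<Rightarrow> nat list option" where
  "run_prog P inp k = run_in (SNode empty_comp []) P inp k"

datatype sx = A nat | L "sx list"

fun sx_enc :: "sx \<Rightarrow> nat list" where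
  "sx_enc (A n) = [0, n]"
| "sx_enc (L xs) = 1 # length xs # concat (map sx_enc xs)"

definition natl :: "nat list \<Rightarrow> sx" where "natl xs = L (map A xs)"

fun expr_sx :: "expr \<Rightarrow> sx" where
  "expr_sx (N n) = L [A 0, A n]"
| "expr_sx (V x) = L [A 1, A x]"
| "expr_sx (Plus a b) = L [A 2, expr_sx a, expr_sx b]"
| "expr_sx (Sub a b) = L [A 3, expr_sx a, expr_sx b]"
| "expr_sx (Less a b) = L [A 4, expr_sx a, expr_sx b]"
| "expr_sx (Eq a b) = L [A 5, expr_sx a, expr_sx b]"
| "expr_sx (And a b) = L [A 6, expr_sx a, expr_sx b]"
| "expr_sx (Not a) = L [A 7, expr_sx a]"
| "expr_sx (ArrRead x a) = L [A 8, A x, expr_sx a]"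
| "expr_sx InLen = L [A 9]"
| "expr_sx (In a) = L [A 10, expr_sx a]"
| "expr_sx (FieldOwn f) = L [A 11, A f]"
| "expr_sx (FieldReq I f) = L [A 12, A I, A f]"

fun com_sx :: "com \<Rightarrow> sx" where
  "com_sx Skip = L [A 0]"
| "com_sx (Assign x e) = L [A 1, A x, expr_sx e]"
| "com_sx (ArrWrite a i e) = L [A 2, A a, expr_sx i, expr_sx e]"
| "com_sx (Seq c1 c2) = L [A 3, com_sx c1, com_sx c2]"
| "com_sx (If b c1 c2) = L [A 4, expr_sx b, com_sx c1, com_sx c2]"
| "com_sx (While b c) = L [A 5, expr_sx b, com_sx c]"
| "com_sx (Out e) = L [A 6, expr_sx e]"
| "com_sx (Return e) = L [A 7, expr_sx e]"
| "com_sx (CallR x I f args) = L [A 8, A x, A I, A f, L (map expr_sx args)]"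
| "com_sx (CallL x f args) = L [A 9, A x, A f, L (map expr_sx args)]"
| "com_sx (SetFieldOwn f e) = L [A 10, A f, expr_sx e]"
| "com_sx (SetFieldReq I f e) = L [A 11, A I, A f, expr_sx e]"

definition iface_sx :: "iface \<Rightarrow> sx" where
  "iface_sx ifc = L [A (iname ifc),
     L (map (\<lambda>(g, rt, pts). L [A g, A rt, natl pts]) (ifuns ifc)),
     L (map (\<lambda>(f, t). L [A f, A t]) (ifields ifc))]"

definition comp_sx :: "comp \<Rightarrow> sx" where
  "comp_sx d = L [A (cname d), natl (cprov d), natl (creq d),
     L (map (\<lambda>(J, g, ps, b). L [A J, A g, natl ps, com_sx b]) (ccode d))]"

fun tree_sx :: "systree \<Rightarrow> sx" where
  "tree_sx (SNode d ws) = L [comp_sx d, L (map (\<lambda>(I, t). L [A I, tree_sx t]) ws)]"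

definition enc_sys :: "systree \<Rightarrow> nat list" where
  "enc_sys S = sx_enc (tree_sx S)"

section \<open>The problem ESCreate\<close>

text \<open>An instance: number of Boolean variables |X|, requirements R (truth
 assignment as a Boolean list of length |X|, expected output), interface
 library, component library, base component.\<close>
record esc_inst =
  nvars :: nat
  reqs :: "(bool list \<times> nat) list"
  lint :: "iface list"
  lcomp :: "comp list"
  base :: comp

definition valid_instance :: "esc_inst \<Rightarrow> bool" where
  "valid_instance I \<longleftrightarrow>
     (\<forall>(i, out) \<in> set (reqs I). length i = nvars I) \<and>
     wf_lint (lint I) \<and>
     distinct (map cname (lcomp I)) \<and>
     (\<forall>d\<in>set (lcomp I). wf_comp (lint I) d) \<and>
     base I \<in> set (lcomp I) \<and>
     (\<exists>J b. (J, main_fn, [], b) \<in> set (ccode (base I)))"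

definition enc_inst :: "esc_inst \<Rightarrow> nat list" where
  "enc_inst I = sx_enc (L [A (nvars I),
      L (map (\<lambda>(i, out). L [natl (map (\<lambda>b. if b then 1 else 0) i), A out]) (reqs I)),
      L (map iface_sx (lint I)),
      L (map comp_sx (lcomp I)),
      comp_sx (base I)])"

text \<open>Input assignment i is passed as the 0/1 list, x_k being entry k-1.\<close>
definition sys_input :: "bool list \<Rightarrow> nat list" where
  "sys_input i = map (\<lambda>b. if b then 1 else 0) i"

definition sys_outputs :: "systree \<Rightarrow> bool list \<Rightarrow> nat \<Rightarrow> bool" where
  "sys_outputs S i out \<longleftrightarrow> (\<exists>k. run_sys S (sys_input i) k = Some [out])"

definition working :: "esc_inst \<Rightarrow> systree \<Rightarrow> bool" where
  "working I S \<longleftrightarrow> valid_sys (lcomp I) {} S \<and> root_comp S = base I \<and>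
     (\<forall>(i, out) \<in> set (reqs I). sys_outputs S i out)"

text \<open>Correct answers of ESCreate (None is the symbol bottom).\<close>
definition esc_correct :: "(systree \<Rightarrow> nat) \<Rightarrow> (systree \<Rightarrow> nat list) \<Rightarrow>
    esc_inst \<Rightarrow> systree option \<Rightarrow> bool" where
  "esc_correct Rew Env I ans = (case ans of
     None \<Rightarrow> \<not> (\<exists>S. working I S)
   | Some S \<Rightarrow> working I S \<and> (\<forall>S'. working I S' \<longrightarrow> Rew S \<le> Rew S'))"

definition enc_ans :: "systree option \<Rightarrow> nat list" where
  "enc_ans ans = (case ans of None \<Rightarrow> sx_enc (L []) | Some S \<Rightarrow> sx_enc (L [tree_sx S]))"

definition poly_time_sys :: "(systree \<Rightarrow> nat list) \<Rightarrow> bool" where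
  "poly_time_sys F \<longleftrightarrow> (\<exists>P a d. \<forall>S. \<exists>k. k \<le> a * (length (enc_sys S) + 1) ^ d \<and>
                                        run_prog P (enc_sys S) k = Some (F S))"

definition solves_ESCreate :: "(systree \<Rightarrow> nat) \<Rightarrow> (systree \<Rightarrow> nat list) \<Rightarrow> com \<Rightarrow> bool" where
  "solves_ESCreate Rew Env P \<longleftrightarrow>
     (\<forall>I. valid_instance I \<longrightarrow>
        (\<exists>k ans. esc_correct Rew Env I ans \<and> run_prog P (enc_inst I) k = Some (enc_ans ans)))"

end

theory Submission
  imports Defs "HOL-Library.Nat_Bijection"
begin

lemma steps_add: "steps T inp (m+n) c = (case steps T inp m c of None \<Rightarrow> None | Some c' \<Rightarrow> steps T inp n c')"
  by (induction m arbitrary: c) (auto split: option.splits)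

lemma steps_halted: "stack c = [] \<Longrightarrow> steps T inp (Suc j) c = None"
  by simp

lemma aval_fcont[simp]: "aval inp fs (fr\<lparr>fcont := z\<rparr>) e = aval inp fs fr e"
  by (induction e) (auto simp: Let_def)

inductive bs :: "nat list \<Rightarrow> (name list \<times> name \<Rightarrow> nat) \<Rightarrow> com \<Rightarrow> frame \<Rightarrow> frame \<Rightarrow> bool"
  for inp fs where
  bSkip: "bs inp fs Skip fr fr"
| bAssign: "bs inp fs (Assign x e) fr (fr\<lparr>fvars := (fvars fr)(x := aval inp fs fr e)\<rparr>)"
| bArr: "bs inp fs (ArrWrite a i e) fr (fr\<lparr>farrs := (farrs fr)(a := (farrs fr a)(aval inp fs fr i := aval inp fs fr e))\<rparr>)"
| bSeq: "bs inp fs c1 fr fr1 \<Longrightarrow> bs inp fs c2 fr1 fr2 \<Longrightarrow> bs inp fs (Seq c1 c2) fr fr2"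
| bIfT: "aval inp fs fr b \<noteq> 0 \<Longrightarrow> bs inp fs c1 fr fr' \<Longrightarrow> bs inp fs (If b c1 c2) fr fr'"
| bIfF: "aval inp fs fr b = 0 \<Longrightarrow> bs inp fs c2 fr fr' \<Longrightarrow> bs inp fs (If b c1 c2) fr fr'"
| bWhF: "aval inp fs fr b = 0 \<Longrightarrow> bs inp fs (While b c) fr fr"
| bWhT: "aval inp fs fr b \<noteq> 0 \<Longrightarrow> bs inp fs c fr fr1 \<Longrightarrow> bs inp fs (While b c) fr1 fr2 \<Longrightarrow> bs inp fs (While b c) fr fr2"

lemma bs_steps:
  assumes "bs inp fs c fr fr'"
  shows "\<And>cfg cs frs. stack cfg = fr\<lparr>fcont := c # cs\<rparr> # frs \<Longrightarrow> flds cfg = fs \<Longrightarrow>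
     \<exists>n. steps T inp n cfg = Some (cfg\<lparr>stack := fr'\<lparr>fcont := cs\<rparr> # frs\<rparr>)"
  using assms
proof (induction rule: bs.induct)
  case (bSkip fr)
  then show ?case by (intro exI[of _ 1]) simp
next
  case (bAssign x e fr)
  then show ?case by (intro exI[of _ 1]) simp
next
  case (bArr a i e fr)
  then show ?case by (intro exI[of _ 1]) simp
next
  case (bSeq c1 fr fr1 c2 fr2)
  let ?c1 = "cfg\<lparr>stack := fr\<lparr>fcont := c1 # c2 # cs\<rparr> # frs\<rparr>"
  have s1: "steps T inp 1 cfg = Some ?c1" using bSeq.prems by simp
  obtain n1 where n1: "steps T inp n1 ?c1 = Some (?c1\<lparr>stack := fr1\<lparr>fcont := c2 # cs\<rparr> # frs\<rparr>)"
    using bSeq.IH(1)[of ?c1 "c2 # cs" frs] bSeq.prems by auto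
  obtain n2 where n2: "steps T inp n2 (?c1\<lparr>stack := fr1\<lparr>fcont := c2 # cs\<rparr> # frs\<rparr>) =
      Some ((?c1\<lparr>stack := fr1\<lparr>fcont := c2 # cs\<rparr> # frs\<rparr>)\<lparr>stack := fr2\<lparr>fcont := cs\<rparr> # frs\<rparr>)"
    using bSeq.IH(2)[of "?c1\<lparr>stack := fr1\<lparr>fcont := c2 # cs\<rparr> # frs\<rparr>" cs frs] bSeq.prems by auto
  show ?case
    apply (rule exI[of _ "1 + n1 + n2"])
    apply (simp only: steps_add s1 n1 n2 option.case)
    by simp
next
  case (bIfT fr b c1 fr' c2)
  let ?c1 = "cfg\<lparr>stack := fr\<lparr>fcont := c1 # cs\<rparr> # frs\<rparr>"
  have s1: "steps T inp 1 cfg = Some ?c1" using bIfT by simp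
  obtain n1 where n1: "steps T inp n1 ?c1 = Some (?c1\<lparr>stack := fr'\<lparr>fcont := cs\<rparr> # frs\<rparr>)"
    using bIfT.IH[of ?c1 cs frs] bIfT.prems by auto
  show ?case
    apply (rule exI[of _ "1 + n1"])
    apply (simp only: steps_add s1 n1 option.case)
    by simp
next
  case (bIfF fr b c2 fr' c1)
  let ?c1 = "cfg\<lparr>stack := fr\<lparr>fcont := c2 # cs\<rparr> # frs\<rparr>"
  have s1: "steps T inp 1 cfg = Some ?c1" using bIfF by simp
  obtain n1 where n1: "steps T inp n1 ?c1 = Some (?c1\<lparr>stack := fr'\<lparr>fcont := cs\<rparr> # frs\<rparr>)"
    using bIfF.IH[of ?c1 cs frs] bIfF.prems by auto
  show ?case
    apply (rule exI[of _ "1 + n1"])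
    apply (simp only: steps_add s1 n1 option.case)
    by simp
next
  case (bWhF fr b c)
  then show ?case by (intro exI[of _ 1]) simp
next
  case (bWhT fr b c fr1 fr2)
  let ?c1 = "cfg\<lparr>stack := fr\<lparr>fcont := c # While b c # cs\<rparr> # frs\<rparr>"
  have s1: "steps T inp 1 cfg = Some ?c1" using bWhT by simp
  obtain n1 where n1: "steps T inp n1 ?c1 = Some (?c1\<lparr>stack := fr1\<lparr>fcont := While b c # cs\<rparr> # frs\<rparr>)"
    using bWhT.IH(1)[of ?c1 "While b c # cs" frs] bWhT.prems by auto
  obtain n2 where n2: "steps T inp n2 (?c1\<lparr>stack := fr1\<lparr>fcont := While b c # cs\<rparr> # frs\<rparr>) =
      Some ((?c1\<lparr>stack := fr1\<lparr>fcont := While b c # cs\<rparr> # frs\<rparr>)\<lparr>stack := fr2\<lparr>fcont := cs\<rparr> # frs\<rparr>)"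
    using bWhT.IH(2)[of "?c1\<lparr>stack := fr1\<lparr>fcont := While b c # cs\<rparr> # frs\<rparr>" cs frs] bWhT.prems by auto
  show ?case
    apply (rule exI[of _ "1 + n1 + n2"])
    apply (simp only: steps_add s1 n1 n2 option.case)
    by simp
qed


fun mxe :: "expr \<Rightarrow> nat" where
  "mxe (V x) = x"
| "mxe (Plus a b) = max (mxe a) (mxe b)"
| "mxe (Sub a b) = max (mxe a) (mxe b)"
| "mxe (Less a b) = max (mxe a) (mxe b)"
| "mxe (Eq a b) = max (mxe a) (mxe b)"
| "mxe (And a b) = max (mxe a) (mxe b)"
| "mxe (Not a) = mxe a"
| "mxe (ArrRead x a) = max x (mxe a)"
| "mxe (In a) = mxe a"
| "mxe _ = 0"

fun mxc :: "com \<Rightarrow> nat" where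
  "mxc (Assign x e) = max x (mxe e)"
| "mxc (ArrWrite a i e) = max a (max (mxe i) (mxe e))"
| "mxc (Seq c1 c2) = max (mxc c1) (mxc c2)"
| "mxc (If b c1 c2) = max (mxe b) (max (mxc c1) (mxc c2))"
| "mxc (While b c) = max (mxe b) (mxc c)"
| "mxc (Out e) = mxe e"
| "mxc (Return e) = mxe e"
| "mxc (SetFieldOwn f e) = mxe e"
| "mxc (SetFieldReq I f e) = mxe e"
| "mxc _ = 0"

fun tre :: "nat \<Rightarrow> expr \<Rightarrow> expr" where
  "tre k (Plus a b) = Plus (tre k a) (tre k b)"
| "tre k (Sub a b) = Sub (tre k a) (tre k b)"
| "tre k (Less a b) = Less (tre k a) (tre k b)"
| "tre k (Eq a b) = Eq (tre k a) (tre k b)"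
| "tre k (And a b) = And (tre k a) (tre k b)"
| "tre k (Not a) = Not (tre k a)"
| "tre k (ArrRead x a) = ArrRead x (tre k a)"
| "tre k InLen = V (k+3)"
| "tre k (In a) = ArrRead (k+1) (tre k a)"
| "tre k (FieldOwn f) = ArrRead (k+2) (N f)"
| "tre k (FieldReq I f) = ArrRead (k+3) (N (prod_encode (I, f)))"
| "tre k e = e"

definition upd :: "nat \<Rightarrow> expr \<Rightarrow> expr" where
  "upd k e = (let c1 = And (Eq (V (k+4)) (N 0)) (Eq e (N 1));
                  c2 = And (Eq (V (k+4)) (N 1)) (Eq e (N 0))
              in Sub (Sub (N 3) (Plus c1 c1)) c2)"

definition Loop :: com where "Loop = While (N 1) Skip"

definition Fin :: "nat \<Rightarrow> com" where
  "Fin k = If (Eq (V (k+4)) (N 2)) (Seq (Out (N 0)) (Return (N 0))) Loop"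

fun tr :: "nat \<Rightarrow> com \<Rightarrow> com" where
  "tr k (Assign x e) = Assign x (tre k e)"
| "tr k (ArrWrite a i e) = ArrWrite a (tre k i) (tre k e)"
| "tr k (Seq c1 c2) = Seq (tr k c1) (tr k c2)"
| "tr k (If b c1 c2) = If (tre k b) (tr k c1) (tr k c2)"
| "tr k (While b c) = While (tre k b) (tr k c)"
| "tr k (Out e) = Assign (k+4) (upd k (tre k e))"
| "tr k (Return e) = Fin k"
| "tr k (SetFieldOwn f e) = ArrWrite (k+2) (N f) (tre k e)"
| "tr k (SetFieldReq I f e) = ArrWrite (k+3) (N (prod_encode (I, f))) (tre k e)"
| "tr k _ = Skip"

definition stf :: "nat \<Rightarrow> nat \<Rightarrow> nat" where
  "stf s v = (if s = 0 \<and> v = 1 then 1 else if s = 1 \<and> v = 0 then 2 else 3)"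

definition stc :: "nat list \<Rightarrow> nat" where "stc xs = foldl stf 0 xs"

definition lf :: "nat list \<Rightarrow> nat \<Rightarrow> nat" where
  "lf xs j = (if j < length xs then xs ! j else 0)"

definition emit :: "nat \<Rightarrow> expr \<Rightarrow> com" where
  "emit k e = Seq (ArrWrite (k+1) (V (k+1)) e) (Assign (k+1) (Plus (V (k+1)) (N 1)))"

definition emitsE :: "nat \<Rightarrow> expr list \<Rightarrow> com" where
  "emitsE k es = foldr (\<lambda>e c. Seq (emit k e) c) es Skip"

fun wsc :: "nat \<Rightarrow> nat \<Rightarrow> nat list \<Rightarrow> com" where
  "wsc k j [] = Skip"
| "wsc k j (r # rs) = Seq (ArrWrite k (N j) (N r)) (wsc k (Suc j) rs)"

definition blkE :: "nat \<Rightarrow> expr list" where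
  "blkE k = map N [1,3,0,3,1,4,0,2,0,k,1,2,0,0,0] @ [V (k+2)] @ map N [1,2,0,0,0] @ [ArrRead k (V (k+2))]"

definition blkL :: "nat \<Rightarrow> nat \<Rightarrow> nat \<Rightarrow> nat list" where
  "blkL k j r = [1,3,0,3,1,4,0,2,0,k,1,2,0,0,0,j,1,2,0,0,0,r]"

definition loopG :: "nat \<Rightarrow> expr list \<Rightarrow> com" where
  "loopG k es = Seq (Assign (k+2) (N 0))
      (While (Less (V (k+2)) (V k)) (Seq (emitsE k es) (Assign (k+2) (Plus (V (k+2)) (N 1)))))"

definition genE :: "nat \<Rightarrow> com" where
  "genE k = Seq (emitsE k (map N [1,3,0,3,1,3,0,3,1,3,0,1,0,k,1,2,0,0,0] @ [V k]))
     (Seq (loopG k (blkE k)) (Seq (emitsE k (map N [1,1,0,0])) (loopG k [ArrRead k (V (k+2))])))"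

definition C0 :: "nat list" where "C0 = [1,4,0,0,1,1,0,0,1,0,1,1,1,4,0,0,0,0,1,0]"
definition preL :: "nat list" where "preL = [1,5,0,0,1,1,1,2,1,0,0,0,1,1,1,3,0,0,1,0,1,0,1,1] @ C0"

definition Gen :: "nat \<Rightarrow> com" where
  "Gen k = Seq (emitsE k (map N preL)) (Seq (genE k) (Seq (emitsE k (map N C0))
     (Seq (genE k) (Assign (k+3) (V (k+1))))))"

definition Wc :: "nat \<Rightarrow> nat list \<Rightarrow> com" where
  "Wc k D = Seq (Assign k (N (length D))) (wsc k 0 D)"

definition kk :: "com \<Rightarrow> nat" where "kk P = Suc (mxc P)"
definition Qc :: "com \<Rightarrow> com" where "Qc P = Seq (Gen (kk P)) (Seq (tr (kk P) P) (Fin (kk P)))"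
definition Dl :: "com \<Rightarrow> nat list" where "Dl P = sx_enc (com_sx (Qc P))"
definition Bc :: "com \<Rightarrow> com" where "Bc P = Seq (Wc (kk P) (Dl P)) (Qc P)"

definition basec :: "com \<Rightarrow> comp" where
  "basec P = \<lparr>cname = 0, cprov = [0], creq = [], ccode = [(0, 0, [], Bc P)]\<rparr>"
definition ifc0 :: iface where "ifc0 = \<lparr>iname = 0, ifuns = [], ifields = []\<rparr>"
definition inst :: "com \<Rightarrow> esc_inst" where
  "inst P = \<lparr>nvars = 0, reqs = [([], 0)], lint = [ifc0], lcomp = [basec P], base = basec P\<rparr>"

definition Ek :: "nat \<Rightarrow> nat list \<Rightarrow> nat list" where
  "Ek k D = [1,3,0,3] @ sx_enc (com_sx (Wc k D)) @ D"

lemma enc_wsc: "sx_enc (com_sx (wsc k j rs)) = concat (map (\<lambda>i. blkL k (j+i) (rs!i)) [0..<length rs]) @ [1,1,0,0]"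
proof (induction rs arbitrary: j)
  case Nil then show ?case by simp
next
  case (Cons r rs)
  have "[0..<length (r#rs)] = 0 # map Suc [0..<length rs]"
    by (simp only: length_Cons upt_conv_Cons[OF zero_less_Suc] map_Suc_upt)
  then show ?case using Cons by (simp add: blkL_def comp_def)
qed

lemma enc_Wc: "sx_enc (com_sx (Wc k D)) = [1,3,0,3,1,3,0,1,0,k,1,2,0,0,0,length D] @
   concat (map (\<lambda>i. blkL k i (D!i)) [0..<length D]) @ [1,1,0,0]"
  by (simp add: Wc_def enc_wsc)

lemma enc_B: "sx_enc (com_sx (Bc P)) = Ek (kk P) (Dl P)"
  by (simp add: Bc_def Ek_def Dl_def)

lemma enc_inst_eq: "enc_inst (inst P) = preL @ Ek (kk P) (Dl P) @ C0 @ Ek (kk P) (Dl P)"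
  by (simp add: enc_inst_def inst_def basec_def comp_sx_def natl_def iface_sx_def ifc0_def preL_def C0_def enc_B[symmetric])


fun okE :: "nat \<Rightarrow> expr \<Rightarrow> bool" where
  "okE k (N n) = True"
| "okE k (V x) = (x \<noteq> k+1)"
| "okE k (ArrRead a (V x)) = (a \<noteq> k+1 \<and> x \<noteq> k+1)"
| "okE k _ = False"

lemma aval_okE: "okE k e \<Longrightarrow> (\<forall>x. x \<noteq> k+1 \<longrightarrow> fvars fr1 x = fvars fr2 x) \<Longrightarrow>
   (\<forall>a. a \<noteq> k+1 \<longrightarrow> farrs fr1 a = farrs fr2 a) \<Longrightarrow> aval inp fs fr1 e = aval inp fs fr2 e"
  by (induction k e rule: okE.induct) auto

lemma lf_snoc: "(lf Lb)(length Lb := v) = lf (Lb @ [v])"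
  by (auto simp: lf_def nth_append fun_eq_iff)

lemma bs_emit:
  assumes "fvars fr (k+1) = length Lb" "farrs fr (k+1) = lf Lb"
  shows "\<exists>fr'. bs inp fs (emit k e) fr fr' \<and> fvars fr' = (fvars fr)(k+1 := Suc (length Lb))
     \<and> farrs fr' = (farrs fr)(k+1 := lf (Lb @ [aval inp fs fr e]))"
proof -
  let ?fr1 = "fr\<lparr>farrs := (farrs fr)(k+1 := (farrs fr (k+1))(aval inp fs fr (V (k+1)) := aval inp fs fr e))\<rparr>"
  let ?fr2 = "?fr1\<lparr>fvars := (fvars ?fr1)(k+1 := aval inp fs ?fr1 (Plus (V (k+1)) (N 1)))\<rparr>"
  have "bs inp fs (emit k e) fr ?fr2"
    unfolding emit_def by (rule bSeq[OF bArr bAssign])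
  moreover have "fvars ?fr2 = (fvars fr)(k+1 := Suc (length Lb))" using assms by simp
  moreover have "farrs ?fr2 = (farrs fr)(k+1 := lf (Lb @ [aval inp fs fr e]))"
    using assms by (simp add: lf_snoc)
  ultimately show ?thesis by blast
qed

lemma bs_emitsE:
  "\<forall>e\<in>set es. okE k e \<Longrightarrow> fvars fr (k+1) = length Lb \<Longrightarrow> farrs fr (k+1) = lf Lb \<Longrightarrow>
   \<exists>fr'. bs inp fs (emitsE k es) fr fr' \<and> fvars fr' = (fvars fr)(k+1 := length Lb + length es)
     \<and> farrs fr' = (farrs fr)(k+1 := lf (Lb @ map (aval inp fs fr) es))"
proof (induction es arbitrary: fr Lb)
  case Nil
  have "bs inp fs (emitsE k []) fr fr" by (simp add: emitsE_def bSkip)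
  then show ?case using Nil by (intro exI[of _ fr]) auto
next
  case (Cons e es)
  obtain fr1 where f1: "bs inp fs (emit k e) fr fr1" "fvars fr1 = (fvars fr)(k+1 := Suc (length Lb))"
     "farrs fr1 = (farrs fr)(k+1 := lf (Lb @ [aval inp fs fr e]))"
    using bs_emit[OF Cons.prems(2,3)] by blast
  have "\<exists>fr2. bs inp fs (emitsE k es) fr1 fr2
     \<and> fvars fr2 = (fvars fr1)(k+1 := length (Lb @ [aval inp fs fr e]) + length es)
     \<and> farrs fr2 = (farrs fr1)(k+1 := lf ((Lb @ [aval inp fs fr e]) @ map (aval inp fs fr1) es))"
    by (rule Cons.IH) (use Cons.prems f1 in auto)
  then obtain fr2 where f2: "bs inp fs (emitsE k es) fr1 fr2"
     "fvars fr2 = (fvars fr1)(k+1 := length (Lb @ [aval inp fs fr e]) + length es)"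
     "farrs fr2 = (farrs fr1)(k+1 := lf ((Lb @ [aval inp fs fr e]) @ map (aval inp fs fr1) es))"
    by blast
  have mm: "map (aval inp fs fr1) es = map (aval inp fs fr) es"
    using Cons.prems(1) f1(2,3) by (auto intro!: aval_okE)
  have "bs inp fs (emitsE k (e # es)) fr fr2 \<and> fvars fr2 = (fvars fr)(k+1 := length Lb + length (e#es))
     \<and> farrs fr2 = (farrs fr)(k+1 := lf (Lb @ map (aval inp fs fr) (e#es)))"
    using f1 f2 by (auto simp: emitsE_def mm intro: bSeq)
  then show ?case by blast
qed


lemma bs_while_G:
  assumes okes: "\<forall>e\<in>set es. okE k e"
    and hyp: "\<And>fr j. j < n \<Longrightarrow> fvars fr (k+2) = j \<Longrightarrow> farrs fr k = lf D \<Longrightarrow> map (aval inp fs fr) es = h j"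
  shows "j \<le> n \<Longrightarrow> fvars fr (k+2) = j \<Longrightarrow> fvars fr k = n \<Longrightarrow> farrs fr k = lf D \<Longrightarrow>
    fvars fr (k+1) = length (Lb @ concat (map h [0..<j])) \<Longrightarrow> farrs fr (k+1) = lf (Lb @ concat (map h [0..<j])) \<Longrightarrow>
    \<exists>fr'. bs inp fs (While (Less (V (k+2)) (V k)) (Seq (emitsE k es) (Assign (k+2) (Plus (V (k+2)) (N 1))))) fr fr'
      \<and> fvars fr' = (fvars fr)(k+2 := n, k+1 := length (Lb @ concat (map h [0..<n])))
      \<and> farrs fr' = (farrs fr)(k+1 := lf (Lb @ concat (map h [0..<n])))"
proof (induction "n - j" arbitrary: j fr)
  case 0
  then have "j = n" by simp
  then have "bs inp fs (While (Less (V (k+2)) (V k)) (Seq (emitsE k es) (Assign (k+2) (Plus (V (k+2)) (N 1))))) fr fr"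
    using 0 by (intro bWhF) simp
  then show ?case using 0 \<open>j = n\<close> by (intro exI[of _ fr]) (auto simp: fun_eq_iff)
next
  case (Suc m)
  let ?G = "\<lambda>j. Lb @ concat (map h [0..<j])"
  have jn: "j < n" using Suc by simp
  obtain fr1 where f1: "bs inp fs (emitsE k es) fr fr1" "fvars fr1 = (fvars fr)(k+1 := length (?G j) + length es)"
     "farrs fr1 = (farrs fr)(k+1 := lf (?G j @ map (aval inp fs fr) es))"
    using bs_emitsE[OF okes Suc.prems(5,6)] by blast
  have mh: "map (aval inp fs fr) es = h j" using hyp[OF jn Suc.prems(2,4)] .
  have gs: "concat (map h [0..<Suc j]) = concat (map h [0..<j]) @ h j" by simp
  have lenh: "length es = length (h j)" using arg_cong[OF mh, of length] by simp
  obtain fr2 where b2: "bs inp fs (Seq (emitsE k es) (Assign (k+2) (Plus (V (k+2)) (N 1)))) fr fr2"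
     and v2: "fvars fr2 = (fvars fr)(k+1 := length (?G (Suc j)), k+2 := Suc j)"
     and a2: "farrs fr2 = (farrs fr)(k+1 := lf (?G (Suc j)))"
  proof -
    let ?fr2 = "fr1\<lparr>fvars := (fvars fr1)(k+2 := aval inp fs fr1 (Plus (V (k+2)) (N 1)))\<rparr>"
    have "bs inp fs (Seq (emitsE k es) (Assign (k+2) (Plus (V (k+2)) (N 1)))) fr ?fr2"
      by (rule bSeq[OF f1(1) bAssign])
    moreover have "fvars ?fr2 = (fvars fr)(k+1 := length (?G (Suc j)), k+2 := Suc j)"
      using f1 Suc.prems lenh by (simp add: add.assoc gs)
    moreover have "farrs ?fr2 = (farrs fr)(k+1 := lf (?G (Suc j)))"
      using f1 mh by (simp add: gs)
    ultimately show ?thesis using that by blast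
  qed
  have "\<exists>fr'. bs inp fs (While (Less (V (k+2)) (V k)) (Seq (emitsE k es) (Assign (k+2) (Plus (V (k+2)) (N 1))))) fr2 fr'
    \<and> fvars fr' = (fvars fr2)(k+2 := n, k+1 := length (?G n))
    \<and> farrs fr' = (farrs fr2)(k+1 := lf (?G n))"
    apply (rule Suc.hyps(1)[where j="Suc j"])
    using Suc.hyps(2) Suc.prems jn by (simp_all add: v2 a2 gs)
  then obtain fr' where f': "bs inp fs (While (Less (V (k+2)) (V k)) (Seq (emitsE k es) (Assign (k+2) (Plus (V (k+2)) (N 1))))) fr2 fr'"
    "fvars fr' = (fvars fr2)(k+2 := n, k+1 := length (?G n))"
    "farrs fr' = (farrs fr2)(k+1 := lf (?G n))" by blast
  have "bs inp fs (While (Less (V (k+2)) (V k)) (Seq (emitsE k es) (Assign (k+2) (Plus (V (k+2)) (N 1))))) fr fr'"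
    using Suc.prems jn by (intro bWhT[OF _ b2 f'(1)]) simp
  moreover have "fvars fr' = (fvars fr)(k+2 := n, k+1 := length (?G n))"
    using f'(2) v2 by (simp add: fun_eq_iff)
  moreover have "farrs fr' = (farrs fr)(k+1 := lf (?G n))"
    using f'(3) a2 by (simp add: fun_eq_iff)
  ultimately show ?case by blast
qed

lemma bs_loopG:
  assumes okes: "\<forall>e\<in>set es. okE k e"
    and hyp: "\<And>fr j. j < n \<Longrightarrow> fvars fr (k+2) = j \<Longrightarrow> farrs fr k = lf D \<Longrightarrow> map (aval inp fs fr) es = h j"
    and "fvars fr k = n" "farrs fr k = lf D" "fvars fr (k+1) = length Lb" "farrs fr (k+1) = lf Lb"
  shows "\<exists>fr'. bs inp fs (loopG k es) fr fr'
      \<and> fvars fr' = (fvars fr)(k+2 := n, k+1 := length (Lb @ concat (map h [0..<n])))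
      \<and> farrs fr' = (farrs fr)(k+1 := lf (Lb @ concat (map h [0..<n])))"
proof -
  let ?fr1 = "fr\<lparr>fvars := (fvars fr)(k+2 := aval inp fs fr (N 0))\<rparr>"
  have "\<exists>fr'. bs inp fs (While (Less (V (k+2)) (V k)) (Seq (emitsE k es) (Assign (k+2) (Plus (V (k+2)) (N 1))))) ?fr1 fr'
      \<and> fvars fr' = (fvars ?fr1)(k+2 := n, k+1 := length (Lb @ concat (map h [0..<n])))
      \<and> farrs fr' = (farrs ?fr1)(k+1 := lf (Lb @ concat (map h [0..<n])))"
    apply (rule bs_while_G[where n=n and D=D and h=h and es=es and k=k and inp=inp and fs=fs, OF okes hyp])
    using assms by auto
  then obtain fr' where f': "bs inp fs (While (Less (V (k+2)) (V k)) (Seq (emitsE k es) (Assign (k+2) (Plus (V (k+2)) (N 1))))) ?fr1 fr'"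
      "fvars fr' = (fvars ?fr1)(k+2 := n, k+1 := length (Lb @ concat (map h [0..<n])))"
      "farrs fr' = (farrs ?fr1)(k+1 := lf (Lb @ concat (map h [0..<n])))" by blast
  have "bs inp fs (loopG k es) fr fr'" unfolding loopG_def by (rule bSeq[OF bAssign f'(1)])
  then show ?thesis using f' by (intro exI[of _ fr']) (simp add: fun_eq_iff)
qed


lemma concat_single_nth: "concat (map (\<lambda>j. [D ! j]) [0..<length D]) = D"
  by (simp only: concat_map_singleton map_nth)

lemma bs_genE:
  assumes "fvars fr k = length D" "farrs fr k = lf D" "fvars fr (k+1) = length Lb" "farrs fr (k+1) = lf Lb"
  shows "\<exists>fr'. bs inp fs (genE k) fr fr'
      \<and> fvars fr' = (fvars fr)(k+1 := length (Lb @ Ek k D), k+2 := length D)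
      \<and> farrs fr' = (farrs fr)(k+1 := lf (Lb @ Ek k D))"
proof -
  define L1 where "L1 = Lb @ [1,3,0,3,1,3,0,3,1,3,0,1,0,k,1,2,0,0,0, length D]"
  define L2 where "L2 = L1 @ concat (map (\<lambda>j. blkL k j (D!j)) [0..<length D])"
  define L3 where "L3 = L2 @ [1,1,0,0]"
  define L4 where "L4 = L3 @ concat (map (\<lambda>j. [D!j]) [0..<length D])"
  have L4: "L4 = Lb @ Ek k D"
    by (simp add: L4_def L3_def L2_def L1_def Ek_def enc_Wc concat_single_nth map_nth)
  obtain fr1 where f1: "bs inp fs (emitsE k (map N [1,3,0,3,1,3,0,3,1,3,0,1,0,k,1,2,0,0,0] @ [V k])) fr fr1"
     "fvars fr1 = (fvars fr)(k+1 := length L1)" "farrs fr1 = (farrs fr)(k+1 := lf L1)"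
    using bs_emitsE[of "map N [1,3,0,3,1,3,0,3,1,3,0,1,0,k,1,2,0,0,0] @ [V k]" k fr Lb inp fs] assms
    by (auto simp: L1_def)
  obtain fr2 where f2: "bs inp fs (loopG k (blkE k)) fr1 fr2"
     "fvars fr2 = (fvars fr1)(k+2 := length D, k+1 := length L2)" "farrs fr2 = (farrs fr1)(k+1 := lf L2)"
  proof -
    have "\<exists>fr'. bs inp fs (loopG k (blkE k)) fr1 fr'
      \<and> fvars fr' = (fvars fr1)(k+2 := length D, k+1 := length (L1 @ concat (map (\<lambda>j. blkL k j (D!j)) [0..<length D])))
      \<and> farrs fr' = (farrs fr1)(k+1 := lf (L1 @ concat (map (\<lambda>j. blkL k j (D!j)) [0..<length D])))"
      apply (rule bs_loopG[where D = D])
      using f1 assms by (auto simp: blkE_def blkL_def lf_def)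
    then show ?thesis using that unfolding L2_def by blast
  qed
  obtain fr3 where f3: "bs inp fs (emitsE k (map N [1,1,0,0])) fr2 fr3"
     "fvars fr3 = (fvars fr2)(k+1 := length L3)" "farrs fr3 = (farrs fr2)(k+1 := lf L3)"
    using bs_emitsE[of "map N [1,1,0,0]" k fr2 L2 inp fs] f2 by (auto simp: L3_def)
  obtain fr4 where f4: "bs inp fs (loopG k [ArrRead k (V (k+2))]) fr3 fr4"
     "fvars fr4 = (fvars fr3)(k+2 := length D, k+1 := length L4)" "farrs fr4 = (farrs fr3)(k+1 := lf L4)"
  proof -
    have "\<exists>fr'. bs inp fs (loopG k [ArrRead k (V (k+2))]) fr3 fr'
      \<and> fvars fr' = (fvars fr3)(k+2 := length D, k+1 := length (L3 @ concat (map (\<lambda>j. [D!j]) [0..<length D])))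
      \<and> farrs fr' = (farrs fr3)(k+1 := lf (L3 @ concat (map (\<lambda>j. [D!j]) [0..<length D])))"
      apply (rule bs_loopG[where D = D])
      using f1 f2 f3 assms by (auto simp: lf_def)
    then show ?thesis using that unfolding L4_def by blast
  qed
  have "bs inp fs (genE k) fr fr4" unfolding genE_def
    by (rule bSeq[OF f1(1) bSeq[OF f2(1) bSeq[OF f3(1) f4(1)]]])
  moreover have "fvars fr4 = (fvars fr)(k+1 := length (Lb @ Ek k D), k+2 := length D)"
    using f1 f2 f3 f4 L4 by (simp add: fun_eq_iff)
  moreover have "farrs fr4 = (farrs fr)(k+1 := lf (Lb @ Ek k D))"
    using f1 f2 f3 f4 L4 by (simp add: fun_eq_iff)
  ultimately show ?thesis by blast
qed


lemma map_aval_N[simp]: "map (aval inp fs fr \<circ> N) xs = xs"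
  by (induction xs) auto

lemma bs_Gen:
  assumes "fvars fr k = length D" "farrs fr k = lf D" "fvars fr (k+1) = 0" "farrs fr (k+1) = lf []"
  shows "\<exists>fr'. bs inp fs (Gen k) fr fr'
      \<and> fvars fr' = (fvars fr)(k+1 := length (preL @ Ek k D @ C0 @ Ek k D), k+2 := length D,
                                 k+3 := length (preL @ Ek k D @ C0 @ Ek k D))
      \<and> farrs fr' = (farrs fr)(k+1 := lf (preL @ Ek k D @ C0 @ Ek k D))"
proof -
  obtain fr1 where f1: "bs inp fs (emitsE k (map N preL)) fr fr1"
     "fvars fr1 = (fvars fr)(k+1 := length preL)" "farrs fr1 = (farrs fr)(k+1 := lf preL)"
    using bs_emitsE[of "map N preL" k fr "[]" inp fs] assms by auto
  obtain fr2 where f2: "bs inp fs (genE k) fr1 fr2"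
     "fvars fr2 = (fvars fr1)(k+1 := length (preL @ Ek k D), k+2 := length D)"
     "farrs fr2 = (farrs fr1)(k+1 := lf (preL @ Ek k D))"
    using bs_genE[of fr1 k D preL inp fs] f1 assms by auto
  have "\<exists>fr3. bs inp fs (emitsE k (map N C0)) fr2 fr3
     \<and> fvars fr3 = (fvars fr2)(k+1 := length (preL @ Ek k D) + length (map N C0))
     \<and> farrs fr3 = (farrs fr2)(k+1 := lf ((preL @ Ek k D) @ map (aval inp fs fr2) (map N C0)))"
    by (rule bs_emitsE) (simp_all add: f2)
  then obtain fr3 where f3: "bs inp fs (emitsE k (map N C0)) fr2 fr3"
     "fvars fr3 = (fvars fr2)(k+1 := length (preL @ Ek k D @ C0))" "farrs fr3 = (farrs fr2)(k+1 := lf (preL @ Ek k D @ C0))"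
    by (auto simp: add.assoc)
  have "\<exists>fr4. bs inp fs (genE k) fr3 fr4
      \<and> fvars fr4 = (fvars fr3)(k+1 := length ((preL @ Ek k D @ C0) @ Ek k D), k+2 := length D)
      \<and> farrs fr4 = (farrs fr3)(k+1 := lf ((preL @ Ek k D @ C0) @ Ek k D))"
    by (rule bs_genE) (simp_all add: f1 f2 f3 assms)
  then obtain fr4 where f4: "bs inp fs (genE k) fr3 fr4"
     "fvars fr4 = (fvars fr3)(k+1 := length (preL @ Ek k D @ C0 @ Ek k D), k+2 := length D)"
     "farrs fr4 = (farrs fr3)(k+1 := lf (preL @ Ek k D @ C0 @ Ek k D))"
    by (auto simp: add.assoc)
  let ?fr5 = "fr4\<lparr>fvars := (fvars fr4)(k+3 := aval inp fs fr4 (V (k+1)))\<rparr>"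
  have "bs inp fs (Gen k) fr ?fr5" unfolding Gen_def
    by (rule bSeq[OF f1(1) bSeq[OF f2(1) bSeq[OF f3(1) bSeq[OF f4(1) bAssign]]]])
  moreover have "fvars ?fr5 = (fvars fr)(k+1 := length (preL @ Ek k D @ C0 @ Ek k D), k+2 := length D,
                                 k+3 := length (preL @ Ek k D @ C0 @ Ek k D))"
    using f1 f2 f3 f4 by (simp add: fun_eq_iff)
  moreover have "farrs ?fr5 = (farrs fr)(k+1 := lf (preL @ Ek k D @ C0 @ Ek k D))"
    using f1 f2 f3 f4 by (simp add: fun_eq_iff)
  ultimately show ?thesis by blast
qed

lemma bs_wsc: "\<exists>fr'. bs inp fs (wsc k j rs) fr fr' \<and> fvars fr' = fvars fr \<and>
   farrs fr' = (farrs fr)(k := (\<lambda>i. if j \<le> i \<and> i < j + length rs then rs ! (i - j) else farrs fr k i))"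
proof (induction rs arbitrary: j fr)
  case Nil
  then show ?case by (intro exI[of _ fr]) (auto intro: bSkip simp: fun_eq_iff)
next
  case (Cons r rs)
  let ?fr1 = "fr\<lparr>farrs := (farrs fr)(k := (farrs fr k)(aval inp fs fr (N j) := aval inp fs fr (N r)))\<rparr>"
  obtain fr' where f': "bs inp fs (wsc k (Suc j) rs) ?fr1 fr'" "fvars fr' = fvars ?fr1"
     "farrs fr' = (farrs ?fr1)(k := (\<lambda>i. if Suc j \<le> i \<and> i < Suc j + length rs then rs ! (i - Suc j) else farrs ?fr1 k i))"
    using Cons.IH by blast
  have "bs inp fs (wsc k j (r # rs)) fr fr'" by (simp add: bSeq[OF bArr f'(1)])
  moreover have "farrs fr' = (farrs fr)(k := (\<lambda>i. if j \<le> i \<and> i < j + length (r#rs) then (r#rs) ! (i - j) else farrs fr k i))"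
    using f'(3) by (auto simp: fun_eq_iff Suc_diff_Suc nth_Cons' le_Suc_eq)
  ultimately show ?case using f'(2) by auto
qed

lemma bs_Wc: "farrs fr k = (\<lambda>_. 0) \<Longrightarrow> \<exists>fr'. bs inp fs (Wc k D) fr fr' \<and> fvars fr' = (fvars fr)(k := length D) \<and>
   farrs fr' = (farrs fr)(k := lf D)"
proof -
  assume z: "farrs fr k = (\<lambda>_. 0)"
  let ?fr1 = "fr\<lparr>fvars := (fvars fr)(k := aval inp fs fr (N (length D)))\<rparr>"
  obtain fr' where f': "bs inp fs (wsc k 0 D) ?fr1 fr'" "fvars fr' = fvars ?fr1"
     "farrs fr' = (farrs ?fr1)(k := (\<lambda>i. if 0 \<le> i \<and> i < 0 + length D then D ! (i - 0) else farrs ?fr1 k i))"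
    using bs_wsc by blast
  have "bs inp fs (Wc k D) fr fr'" unfolding Wc_def by (rule bSeq[OF bAssign f'(1)])
  moreover have "farrs fr' = (farrs fr)(k := lf D)" using f'(3) z by (auto simp: fun_eq_iff lf_def)
  ultimately show ?thesis using f'(2) by auto
qed


definition Rel :: "nat \<Rightarrow> nat list \<Rightarrow> config \<Rightarrow> config \<Rightarrow> bool" where
"Rel k inp cP cO \<longleftrightarrow> (\<exists>fr fo. stack cP = [fr] \<and> stack cO = [fo] \<and> fpath fr = [] \<and>
   fcont fo = map (tr k) (fcont fr) @ [Fin k] \<and> (\<forall>c\<in>set (fcont fr). mxc c < k) \<and>
   (\<forall>x<k. fvars fo x = fvars fr x) \<and> (\<forall>a<k. farrs fo a = farrs fr a) \<and>
   fvars fo (k+3) = length inp \<and> farrs fo (k+1) = lf inp \<and> fvars fo (k+4) = stc (outs cP) \<and>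
   (\<forall>f. farrs fo (k+2) f = flds cP ([], f)) \<and>
   (\<forall>I f. farrs fo (k+3) (prod_encode (I, f)) = flds cP ([I], f)) \<and>
   outs cO = [])"

lemma aval_tre: "mxe e < k \<Longrightarrow> fpath fr = [] \<Longrightarrow> (\<forall>x<k. fvars fo x = fvars fr x) \<Longrightarrow>
  (\<forall>a<k. farrs fo a = farrs fr a) \<Longrightarrow> fvars fo (k+3) = length inp \<Longrightarrow> farrs fo (k+1) = lf inp \<Longrightarrow>
  (\<forall>f. farrs fo (k+2) f = fs ([], f)) \<Longrightarrow> (\<forall>I f. farrs fo (k+3) (prod_encode (I, f)) = fs ([I], f)) \<Longrightarrow>
  aval inp' fs' fo (tre k e) = aval inp fs fr e"
  by (induction e) (auto simp: lf_def Let_def)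

lemma aval_upd: "aval inp fs fr (upd k e) = stf (fvars fr (k+4)) (aval inp fs fr e)"
  by (simp add: upd_def stf_def Let_def)

lemma stc_snoc: "stc (xs @ [v]) = stf (stc xs) v"
  by (simp add: stc_def)

lemma lockstep:
  assumes R: "Rel k inp cP cO" and st: "step (SNode empty_comp []) inp cP = Some c1"
  shows "(stack c1 = [] \<and> outs c1 = outs cP \<and> (\<exists>fo rest. stack cO = [fo] \<and> fcont fo = Fin k # rest
            \<and> fvars fo (k+4) = stc (outs cP) \<and> outs cO = []))
       \<or> (\<exists>c2. step T inp' cO = Some c2 \<and> Rel k inp c1 c2)"
proof -
  obtain fr fo where r: "stack cP = [fr]" "stack cO = [fo]" "fpath fr = []"
    "fcont fo = map (tr k) (fcont fr) @ [Fin k]" "\<forall>c\<in>set (fcont fr). mxc c < k"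
    "\<forall>x<k. fvars fo x = fvars fr x" "\<forall>a<k. farrs fo a = farrs fr a"
    "fvars fo (k+3) = length inp" "farrs fo (k+1) = lf inp" "fvars fo (k+4) = stc (outs cP)"
    "\<forall>f. farrs fo (k+2) f = flds cP ([], f)"
    "\<forall>I f. farrs fo (k+3) (prod_encode (I, f)) = flds cP ([I], f)" "outs cO = []"
    using R unfolding Rel_def by blast
  note av = aval_tre[OF _ r(3) r(6) r(7) r(8) r(9) r(11) r(12)]
  show ?thesis
  proof (cases "fcont fr")
    case Nil
    then show ?thesis using st r by (auto simp: do_return_def)
  next
    case (Cons c cs)
    then have mc: "mxc c < k" "\<forall>c\<in>set cs. mxc c < k" using r(5) by auto
    show ?thesis
    proof (cases c)
      case Skip
      then show ?thesis using st r Cons mc by (intro disjI2) (auto simp: Let_def Rel_def)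
    next
      case (Assign x e)
      then show ?thesis using st r Cons mc by (intro disjI2) (auto simp: Let_def Rel_def av)
    next
      case (ArrWrite a i e)
      then show ?thesis using st r Cons mc by (intro disjI2) (auto simp: Let_def Rel_def av)
    next
      case (Seq c1 c2)
      then show ?thesis using st r Cons mc by (intro disjI2) (auto simp: Let_def Rel_def)
    next
      case (If b c1 c2)
      then show ?thesis using st r Cons mc by (intro disjI2) (auto simp: Let_def Rel_def av)
    next
      case (While b c1)
      then show ?thesis using st r Cons mc by (intro disjI2) (auto simp: Let_def Rel_def av)
    next
      case (Out e)
      then show ?thesis using st r Cons mc by (intro disjI2) (auto simp: Let_def Rel_def av aval_upd stc_snoc)
    next
      case (Return e)
      then show ?thesis using st r Cons mc by (auto simp: do_return_def)
    next
      case (CallR x I f args)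
      then show ?thesis using st r Cons by auto
    next
      case (CallL x f args)
      then show ?thesis using st r Cons by (auto simp: do_call_def code_at_def empty_comp_def)
    next
      case (SetFieldOwn f e)
      then show ?thesis using st r Cons mc by (intro disjI2) (auto simp: Let_def Rel_def av)
    next
      case (SetFieldReq I f e)
      then show ?thesis using st r Cons mc by (intro disjI2) (auto simp: Let_def Rel_def av prod_encode_eq)
    qed
  qed
qed


lemma sim_run:
  "Rel k inp cP cO \<Longrightarrow> steps (SNode empty_comp []) inp n cP = Some cF \<Longrightarrow> stack cF = [] \<Longrightarrow>
   \<exists>m cX fo rest. steps T inp' m cO = Some cX \<and> stack cX = [fo] \<and> fcont fo = Fin k # rest
     \<and> fvars fo (k+4) = stc (outs cF) \<and> outs cX = []"
proof (induction n arbitrary: cP cO)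
  case 0
  then show ?case by (auto simp: Rel_def)
next
  case (Suc n)
  obtain c1 where s1: "step (SNode empty_comp []) inp cP = Some c1" and sn: "steps (SNode empty_comp []) inp n c1 = Some cF"
    using Suc.prems(2) by (auto split: option.splits)
  from lockstep[OF Suc.prems(1) s1, of T inp']
  show ?case
  proof
    assume h: "stack c1 = [] \<and> outs c1 = outs cP \<and> (\<exists>fo rest. stack cO = [fo] \<and> fcont fo = Fin k # rest
            \<and> fvars fo (k+4) = stc (outs cP) \<and> outs cO = [])"
    have "n = 0"
    proof (rule ccontr)
      assume "n \<noteq> 0" then obtain n' where "n = Suc n'" by (cases n) auto
      then show False using sn h by simp
    qed
    then have "cF = c1" using sn by simp
    then show ?thesis using h by (intro exI[of _ 0]) auto
  next
    assume "\<exists>c2. step T inp' cO = Some c2 \<and> Rel k inp c1 c2"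
    then obtain c2 where c2: "step T inp' cO = Some c2" "Rel k inp c1 c2" by blast
    obtain m cX fo rest where m: "steps T inp' m c2 = Some cX" "stack cX = [fo]" "fcont fo = Fin k # rest"
       "fvars fo (k+4) = stc (outs cF)" "outs cX = []"
      using Suc.IH[OF c2(2) sn Suc.prems(3)] by blast
    have "steps T inp' (Suc m) cO = Some cX" using c2(1) m(1) by simp
    then show ?thesis using m by blast
  qed
qed

lemma fin_halt:
  assumes "stack cX = [fo]" "fcont fo = Fin k # rest" "fvars fo (k+4) = 2" "outs cX = []"
  shows "\<exists>c'. steps T inp (Suc (Suc (Suc (Suc 0)))) cX = Some c' \<and> stack c' = [] \<and> outs c' = [0]"
  using assms by (simp add: Fin_def do_return_def)

lemma loop_cycle:
  assumes "stack cL = [fo]" "fcont fo = Loop # rest"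
  shows "\<exists>c. steps T inp j cL = Some c \<and> stack c \<noteq> []"
  using assms
proof (induction j rule: less_induct)
  case (less j)
  have s2: "steps T inp (Suc (Suc 0)) cL = Some cL"
    using less.prems by (simp add: Loop_def)
  show ?case
  proof (cases j)
    case 0 then show ?thesis using less.prems by simp
  next
    case (Suc j1)
    show ?thesis
    proof (cases j1)
      case 0 then show ?thesis using less.prems Suc by (simp add: Loop_def)
    next
      case (Suc j2)
      have "steps T inp j cL = steps T inp j2 cL"
        using steps_add[of T inp "Suc (Suc 0)" j2 cL] s2 \<open>j = Suc j1\<close> Suc by simp
      then show ?thesis using less.IH[of j2] less.prems \<open>j = Suc j1\<close> Suc by simp
    qed
  qed
qed

lemma fin_loop:
  assumes "stack cX = [fo]" "fcont fo = Fin k # rest" "fvars fo (k+4) \<noteq> 2"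
  shows "\<exists>cL. steps T inp (Suc 0) cX = Some cL \<and> (\<forall>j. \<exists>c. steps T inp j cL = Some c \<and> stack c \<noteq> [])"
proof -
  let ?cL = "cX\<lparr>stack := [fo\<lparr>fcont := Loop # rest\<rparr>]\<rparr>"
  have "steps T inp (Suc 0) cX = Some ?cL" using assms by (simp add: Fin_def)
  moreover have "\<forall>j. \<exists>c. steps T inp j ?cL = Some c \<and> stack c \<noteq> []"
    by (intro allI loop_cycle[of _ "fo\<lparr>fcont := Loop # rest\<rparr>" rest]) auto
  ultimately show ?thesis by blast
qed

lemma never_halts:
  assumes "steps T inp Nn c0 = Some cL" "\<forall>j. \<exists>c. steps T inp j cL = Some c \<and> stack c \<noteq> []"
    and "steps T inp n c0 = Some c" "stack c = []"
  shows False
proof -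
  obtain c'' where c'': "steps T inp (Suc n) cL = Some c''" "stack c'' \<noteq> []" using assms(2) by blast
  have e1: "steps T inp (Nn + Suc n) c0 = steps T inp (Suc n) cL"
    by (simp only: steps_add assms(1) option.case)
  have e2: "steps T inp (n + Suc Nn) c0 = steps T inp (Suc Nn) c"
    by (simp only: steps_add assms(3) option.case)
  have e3: "steps T inp (Suc Nn) c = None" using assms(4) by simp
  have ee: "Nn + Suc n = n + Suc Nn" by simp
  have "Some c'' = None" using e1 e2 e3 c''(1) ee by metis
  then show False by simp
qed

lemma stc_10: "stc [1, 0] = 2" by (simp add: stc_def stf_def)

lemma foldl_stf3: "foldl stf 3 xs = 3"
  by (induction xs) (auto simp: stf_def)

lemma stc_11: "stc (1 # 1 # xs) = 3"
  by (simp add: stc_def stf_def foldl_stf3)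


lemma lf_nil: "lf [] = (\<lambda>_. 0)" by (simp add: lf_def fun_eq_iff)

lemma init_phase:
  "\<exists>n0 cO0. steps T inp n0 (init_config (Bc P)) = Some cO0 \<and> Rel (kk P) (enc_inst (inst P)) (init_config P) cO0"
proof -
  define k where "k = kk P"
  define D where "D = Dl P"
  define X where "X = preL @ Ek k D @ C0 @ Ek k D"
  have X: "enc_inst (inst P) = X" by (simp add: X_def k_def D_def enc_inst_eq)
  define fr0 where "fr0 = \<lparr>fpath = [], fcont = [Bc P], fvars = (\<lambda>_. 0::nat), farrs = (\<lambda>_ _. 0::nat), fret = 0::nat\<rparr>"
  define c0 where "c0 = init_config (Bc P)"
  have c0: "stack c0 = [fr0]" "flds c0 = (\<lambda>_. 0)" "outs c0 = []" by (simp_all add: c0_def fr0_def init_config_def)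
  define c1 where "c1 = c0\<lparr>stack := [fr0\<lparr>fcont := [Wc k D, Qc P]\<rparr>]\<rparr>"
  have s1: "steps T inp 1 c0 = Some c1"
    using c0 by (simp add: c1_def fr0_def Bc_def k_def D_def)
  obtain frW where fW: "bs inp (\<lambda>_. 0) (Wc k D) fr0 frW" "fvars frW = (fvars fr0)(k := length D)"
      "farrs frW = (farrs fr0)(k := lf D)"
    using bs_Wc[of fr0 k inp "\<lambda>_. 0" D] by (auto simp: fr0_def)
  obtain n1 where n1: "steps T inp n1 c1 = Some (c1\<lparr>stack := [frW\<lparr>fcont := [Qc P]\<rparr>]\<rparr>)"
    using bs_steps[OF fW(1), of c1 "[Qc P]" "[]" T] c0 by (auto simp: c1_def)
  define c2 where "c2 = c1\<lparr>stack := [frW\<lparr>fcont := [Gen k, Seq (tr k P) (Fin k)]\<rparr>]\<rparr>"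
  have s2: "steps T inp 1 (c1\<lparr>stack := [frW\<lparr>fcont := [Qc P]\<rparr>]\<rparr>) = Some c2"
    by (simp add: c2_def Qc_def k_def)
  obtain frG where fG: "bs inp (\<lambda>_. 0) (Gen k) frW frG"
     "fvars frG = (fvars frW)(k+1 := length X, k+2 := length D, k+3 := length X)"
     "farrs frG = (farrs frW)(k+1 := lf X)"
    using bs_Gen[of frW k D inp "\<lambda>_. 0"] fW by (auto simp: fr0_def X_def lf_nil)
  obtain n2 where n2: "steps T inp n2 c2 = Some (c2\<lparr>stack := [frG\<lparr>fcont := [Seq (tr k P) (Fin k)]\<rparr>]\<rparr>)"
    using bs_steps[OF fG(1), of c2 "[Seq (tr k P) (Fin k)]" "[]" T] c0 by (auto simp: c2_def c1_def)
  define c3 where "c3 = c2\<lparr>stack := [frG\<lparr>fcont := [tr k P, Fin k]\<rparr>]\<rparr>"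
  have s3: "steps T inp 1 (c2\<lparr>stack := [frG\<lparr>fcont := [Seq (tr k P) (Fin k)]\<rparr>]\<rparr>) = Some c3"
    by (simp add: c3_def)
  have all: "steps T inp (1 + n1 + 1 + n2 + 1) c0 = Some c3"
    by (simp only: steps_add s1 n1 s2 n2 s3 option.case)
  have "Rel k X (init_config P) c3"
    unfolding Rel_def
    apply (rule exI[of _ "\<lparr>fpath = [], fcont = [P], fvars = (\<lambda>_. 0::nat), farrs = (\<lambda>_ _. 0::nat), fret = 0::nat\<rparr>"])
    apply (rule exI[of _ "frG\<lparr>fcont := [tr k P, Fin k]\<rparr>"])
    using fG fW c0 by (auto simp: c3_def c2_def c1_def init_config_def fr0_def k_def kk_def stc_def)
  then have R': "Rel (kk P) (enc_inst (inst P)) (init_config P) c3" using X by (simp only: k_def)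
  show ?thesis using all R' unfolding c0_def by blast
qed


lemma refs_tre[simp]: "expr_refs (tre k e) = {}"
  by (induction k e rule: tre.induct) auto

lemma refs_tr[simp]: "com_refs (tr k c) = {}"
  by (induction k c rule: tr.induct) (auto simp: upd_def Fin_def Loop_def Let_def)

lemma refs_emitsE: "\<forall>e\<in>set es. expr_refs e = {} \<Longrightarrow> com_refs (emitsE k es) = {}"
  by (induction es) (auto simp: emitsE_def emit_def)

lemma refs_wsc[simp]: "com_refs (wsc k j rs) = {}"
  by (induction rs arbitrary: j) auto

lemma refs_B: "com_refs (Bc P) = {}"
  by (simp add: Bc_def Wc_def Qc_def Gen_def genE_def loopG_def refs_emitsE blkE_def Fin_def Loop_def)

lemma valid_inst: "valid_instance (inst P)"
  by (simp add: valid_instance_def inst_def wf_lint_def wf_iface_def wf_comp_def basec_def ifc0_def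
      refs_B main_fn_def)

lemma valid_S0: "valid_sys [basec P] {} (SNode (basec P) [])"
  by (rule valid_sys.intros) (auto simp: basec_def)

lemma valid_inv: "valid_sys [basec P] {} S \<Longrightarrow> S = SNode (basec P) []"
  by (erule valid_sys.cases) (auto simp: basec_def)

lemma run_sys_S0: "run_sys (SNode (basec P) []) inp n = run_in (SNode (basec P) []) (Bc P) inp n"
  by (simp add: run_sys_def basec_def main_fn_def)

lemma working_iff: "working (inst P) S \<longleftrightarrow> S = SNode (basec P) [] \<and> sys_outputs (SNode (basec P) []) [] 0"
  using valid_inv[of P S] valid_S0[of P]
  by (auto simp: working_def inst_def basec_def)

theorem mainTheorem1:
  fixes Rew :: "systree \<Rightarrow> nat" and Env :: "systree \<Rightarrow> nat list"
  assumes "\<forall>S. 0 < Rew S"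
    and "poly_time_sys (\<lambda>S. [Rew S])"
    and "poly_time_sys Env"
  shows "\<not> (\<exists>P. solves_ESCreate Rew Env P)"
proof
  assume "\<exists>P. solves_ESCreate Rew Env P"
  then obtain P where sP: "solves_ESCreate Rew Env P" by blast
  define S0 where "S0 = SNode (basec P) []"
  obtain kx ans where ec: "esc_correct Rew Env (inst P) ans"
      and rp: "run_prog P (enc_inst (inst P)) kx = Some (enc_ans ans)"
    using sP valid_inst[of P] unfolding solves_ESCreate_def by blast
  obtain cF where sF: "steps (SNode empty_comp []) (enc_inst (inst P)) kx (init_config P) = Some cF"
      "stack cF = []" "outs cF = enc_ans ans"
    using rp unfolding run_prog_def run_in_def by (auto split: option.splits if_splits)
  obtain n0 cO0 where i0: "steps S0 [] n0 (init_config (Bc P)) = Some cO0"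
      "Rel (kk P) (enc_inst (inst P)) (init_config P) cO0"
    using init_phase by blast
  obtain m cX fo rest where sm: "steps S0 [] m cO0 = Some cX" "stack cX = [fo]" "fcont fo = Fin (kk P) # rest"
     "fvars fo (kk P + 4) = stc (outs cF)" "outs cX = []"
    using sim_run[OF i0(2) sF(1) sF(2), of S0 "[]"] by blast
  have pre: "steps S0 [] (n0 + m) (init_config (Bc P)) = Some cX"
    by (simp only: steps_add i0(1) sm(1) option.case)
  show False
  proof (cases ans)
    case None
    then have "stc (outs cF) = 2" using sF(3) by (simp add: enc_ans_def stc_def stf_def)
    then obtain c' where c': "steps S0 [] (Suc (Suc (Suc (Suc 0)))) cX = Some c'" "stack c' = []" "outs c' = [0]"
      using fin_halt[OF sm(2) sm(3) _ sm(5)] sm(4) by metis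
    have "steps S0 [] (n0 + m + Suc (Suc (Suc (Suc 0)))) (init_config (Bc P)) = Some c'"
      by (simp only: steps_add[of S0 "[]" "n0 + m"] pre c'(1) option.case)
    then have "run_in S0 (Bc P) [] (n0 + m + Suc (Suc (Suc (Suc 0)))) = Some [0]"
      using c' by (simp add: run_in_def)
    then have "sys_outputs S0 [] 0"
      unfolding sys_outputs_def sys_input_def S0_def run_sys_S0 by (auto simp: S0_def)
    then have "working (inst P) S0" using working_iff[of P S0] by (simp add: S0_def)
    then show False using ec None by (auto simp: esc_correct_def)
  next
    case (Some S)
    then have "working (inst P) S" using ec by (simp add: esc_correct_def)
    then have wS: "S = S0" "sys_outputs S0 [] 0" using working_iff[of P S] by (auto simp: S0_def)
    then obtain k' where "run_sys S0 [] k' = Some [0]"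
      unfolding sys_outputs_def sys_input_def by auto
    then have "run_in S0 (Bc P) [] k' = Some [0]" by (simp add: S0_def run_sys_S0)
    then obtain c where c: "steps S0 [] k' (init_config (Bc P)) = Some c" "stack c = []"
      unfolding run_in_def by (auto split: option.splits if_splits)
    have "stc (outs cF) = 3" using sF(3) Some stc_11[of "sx_enc (tree_sx S)"] by (simp add: enc_ans_def)
    then have "fvars fo (kk P + 4) \<noteq> 2" using sm(4) by simp
    then obtain cL where cL: "steps S0 [] (Suc 0) cX = Some cL" "\<forall>j. \<exists>c. steps S0 [] j cL = Some c \<and> stack c \<noteq> []"
      using fin_loop[OF sm(2) sm(3)] by blast
    have "steps S0 [] (n0 + m + Suc 0) (init_config (Bc P)) = Some cL"
      by (simp only: steps_add[of S0 "[]" "n0 + m"] pre cL(1) option.case)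
    then show False using never_halts[OF _ cL(2) c] by blast
  qed
qed

end
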